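(* Assume the standing hypothesis (H) below. Then for every $K>0$ there exists a constant $C_K>0$ such that for all $w_1,w_2\in W$ with $\max\{|w_1|_W,|w_2|_W\}\le K$, $$d_H(Z(w_1),Z(w_2))\le C_K|w_1-w_2|_W,$$ where $d_H(A,B)=\max\{\sup_{z\in A}\mathrm{dist}(z,B),\sup_{z'\in B}\mathrm{dist}(z',A)\}$ is the Hausdorff distance.
   Context: $X$ is a real Hilbert space with inner product $\langle\cdot,\cdot\rangle$ and norm $|x|=\sqrt{\langle x,x\rangle}$; $W$ is a real Banach space with norm $|\cdot|_W$. $G:X\times W\to[0,\infty)$ is locally Lipschitz continuous and $Z(w):=\{x\in X: G(x,w)\le 1\}$; $\partial Z(w)$ is its boundary and $\mathrm{dist}(x,S)=\inf_{s\in S}|x-s|$. The partial gradient $\nabla_xG(x,w)\in X$ is defined by $\langle\nabla_xG(x,w),y\rangle=\lim_{t\to0}\frac1t(G(x+ty,w)-G(x,w))$ for all $y\in X$. Hypothesis (H): $\nabla_xG(x,w)$ exists for all $x\in X$, $w\in W$, and there are positive constants $\lambda,c,L$ and functions $\mu_1:W\times[0,\infty)\to[0,\infty)$, $\mu_2:[0,\infty)\to[0,\infty)$ with $\mu_1(w,0)=\mu_2(0)=0$, $\lim_{s\to\infty}\mu_1(w,s)=\lim_{s\to\infty}\mu_2(s)=\infty$ for every $w$, such that for all $x,y,z\in X$, $w,w'\in W$: (i) $G(x,w)=1\Rightarrow|\nabla_xG(x,w)|\ge c$; (ii) $|\nabla_xG(x,w)-\nabla_xG(y,w)|\le\mu_1(w,|x-y|)$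 if $x,y\in Z(w)$; (iii) $\langle\nabla_xG(x,w)-\nabla_xG(z,w),x-z\rangle\ge-\lambda|x-z|^2$ if $x\in\partial Z(w)$, $z\in Z(w)$; (iv) $|G(x,w)-G(x,w')|\le L|w-w'|_W$; (v) for every $\rho>0$, $\mathrm{dist}(x,Z(w))\ge\rho\Rightarrow G(x,w)-1\ge\mu_2(\rho)$. *)

theory Defs
  imports "HOL-Analysis.Analysis"
begin

definition loc_lipschitz :: "('a::metric_space \<Rightarrow> 'b::metric_space) \<Rightarrow> bool" where
  "loc_lipschitz f \<longleftrightarrow>
     (\<forall>p. \<exists>e>0. \<exists>M. \<forall>a\<in>ball p e. \<forall>b\<in>ball p e. dist (f a) (f b) \<le> M * dist a b)"

text \<open>Distance from a point to a set, extended-real valued (inf over the empty set is +infinity).\<close>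
definition edist_set :: "'a::metric_space \<Rightarrow> 'a set \<Rightarrow> ereal" where
  "edist_set x S = (INF s\<in>S. ereal (dist x s))"

definition hdist :: "'a::metric_space set \<Rightarrow> 'a set \<Rightarrow> ereal" where
  "hdist A B = max (SUP z\<in>A. edist_set z B) (SUP z\<in>B. edist_set z A)"

definition Zset :: "('a \<Rightarrow> 'w \<Rightarrow> real) \<Rightarrow> 'w \<Rightarrow> 'a set" where
  "Zset G w = {x. G x w \<le> 1}"

end

theory Submission
  imports Defs
begin

lemma greedy:
  fixes E :: "('a::{metric_space,complete_space} \<times> real) set" and B :: real
  assumes Bnn: "B \<ge> 0"
    and nonneg: "\<And>p s. (p,s)\<in>E \<Longrightarrow> 0 \<le> s"
    and closedE: "\<And>P S p s. (\<And>n. (P n, S n) \<in> E) \<Longrightarrow> P \<longlonglongrightarrow> p \<Longrightarrow> S \<longlonglongrightarrow> s \<Longrightarrow> (p,s)\<in>E"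
    and step: "\<And>p s. (p,s)\<in>E \<Longrightarrow> s>0 \<Longrightarrow> \<exists>q t. (q,t)\<in>E \<and> t < s \<and> dist q p \<le> B*(s - t)"
    and start: "(x0,s0)\<in>E"
  shows "\<exists>p. (p,0)\<in>E \<and> dist p x0 \<le> B * s0"
proof -
  define R where "R z = {z'\<in>E. snd z' \<le> snd z \<and> dist (fst z') (fst z) \<le> B*(snd z - snd z')}" for z
  have Rrefl: "z \<in> R z" if "z \<in> E" for z using that by (auto simp: R_def)
  have Rtrans: "z3 \<in> R z1" if "z2 \<in> R z1" "z3 \<in> R z2" for z1 z2 z3
  proof -
    have "dist (fst z3) (fst z1) \<le> dist (fst z3) (fst z2) + dist (fst z2) (fst z1)"
      by (rule dist_triangle)
    also have "\<dots> \<le> B*(snd z2 - snd z3) + B*(snd z1 - snd z2)"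
      using that by (auto simp: R_def intro: add_mono)
    finally show ?thesis using that by (auto simp: R_def algebra_simps)
  qed
  define m where "m z = Inf (snd ` R z)" for z
  have bdd: "bdd_below (snd ` R z)" for z
    using nonneg by (auto simp: R_def bdd_below_def intro!: exI[of _ 0])
  have mle: "m z \<le> snd z'" if "z' \<in> R z" for z z'
    unfolding m_def using that bdd by (intro cInf_lower) auto
  have ex: "\<exists>z'. z' \<in> R z \<and> snd z' \<le> (snd z + m z)/2" if zE: "z \<in> E" for z
  proof (cases "m z < snd z")
    case True
    then have "Inf (snd ` R z) < (snd z + m z)/2" by (simp add: m_def)
    then obtain y where "y \<in> snd ` R z" "y < (snd z + m z)/2"
      using cInf_less_iff[OF _ bdd] Rrefl[OF zE] by blast
    then show ?thesis by force
  next
    case False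
    then show ?thesis using Rrefl[OF zE] mle[OF Rrefl[OF zE]] by (intro exI[of _ z]) auto
  qed
  define nxt where "nxt z = (SOME z'. z' \<in> R z \<and> snd z' \<le> (snd z + m z)/2)" for z
  have nxt: "nxt z \<in> R z \<and> snd (nxt z) \<le> (snd z + m z)/2" if "z \<in> E" for z
    unfolding nxt_def using someI_ex[OF ex[OF that]] .
  define Z where "Z n = (nxt ^^ n) (x0,s0)" for n
  have ZE: "Z n \<in> E" for n
  proof (induction n)
    case 0 then show ?case using start by (simp add: Z_def)
  next
    case (Suc n) then show ?case using nxt[of "Z n"] by (simp add: Z_def R_def)
  qed
  have Zsuc: "Z (Suc n) \<in> R (Z n) \<and> snd (Z (Suc n)) \<le> (snd (Z n) + m (Z n))/2" for n
    using nxt[OF ZE[of n]] by (simp add: Z_def)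
  have ZR: "Z (n + k) \<in> R (Z n)" for n k
  proof (induction k)
    case 0 then show ?case using Rrefl[OF ZE] by simp
  next
    case (Suc k) then show ?case using Rtrans Zsuc[of "n+k"] by auto
  qed
  define S where "S n = snd (Z n)" for n
  define P where "P n = fst (Z n)" for n
  have ZPS: "Z n = (P n, S n)" for n by (simp add: P_def S_def)
  have Sdec: "decseq S"
    unfolding decseq_Suc_iff using Zsuc by (auto simp: S_def R_def)
  have Snn: "\<forall>i. 0 \<le> S i" using nonneg ZE ZPS by metis
  obtain \<sigma> where S_lim: "S \<longlonglongrightarrow> \<sigma>" and S_ge: "\<forall>i. \<sigma> \<le> S i"
    using decseq_convergent[OF Sdec Snn] by blast
  have Pdist: "dist (P m') (P n) \<le> B * (S n - S m')" if "n \<le> m'" for n m'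
    using ZR[of n "m' - n"] that by (simp add: R_def P_def S_def)
  have "Cauchy S" using S_lim by (rule LIMSEQ_imp_Cauchy)
  have "Cauchy P"
  proof (rule metric_CauchyI)
    fix e :: real assume e: "e > 0"
    obtain M where M: "\<forall>m'\<ge>M. \<forall>n\<ge>M. dist (S m') (S n) < e/(B+1)"
      using \<open>Cauchy S\<close> e Bnn unfolding Cauchy_def by (meson divide_pos_pos add_nonneg_pos zero_less_one)
    show "\<exists>M. \<forall>m'\<ge>M. \<forall>n\<ge>M. dist (P m') (P n) < e"
    proof (intro exI allI impI)
      fix m' n assume h: "M \<le> m'" "M \<le> n"
      have key: "dist (P a) (P b) < e" if "M \<le> a" "M \<le> b" "b \<le> a" for a b
      proof -
        have "dist (P a) (P b) \<le> B * (S b - S a)" using Pdist that by blast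
        also have "\<dots> \<le> B * dist (S a) (S b)" using Bnn by (intro mult_left_mono) (auto simp: dist_real_def)
        also have "\<dots> \<le> B * (e/(B+1))" using M that Bnn by (intro mult_left_mono) (auto intro: less_imp_le)
        also have "\<dots> < e" using e Bnn by (simp add: field_simps)
        finally show ?thesis .
      qed
      show "dist (P m') (P n) < e"
        using key[of m' n] key[of n m'] h by (cases "n \<le> m'") (auto simp: dist_commute)
    qed
  qed
  then obtain p where P_lim: "P \<longlonglongrightarrow> p"
    using Cauchy_convergent_iff convergent_def by blast
  have pE: "(p,\<sigma>) \<in> E" using closedE[of P S, OF _ P_lim S_lim] ZE ZPS by metis
  have pR: "(p,\<sigma>) \<in> R (Z n)" for n
  proof -
    have "dist p (P n) \<le> B * (S n - \<sigma>)"
    proof (rule LIMSEQ_le)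
      show "(\<lambda>k. dist (P k) (P n)) \<longlonglongrightarrow> dist p (P n)"
        by (intro tendsto_intros P_lim)
      show "(\<lambda>k. B * (S n - S k)) \<longlonglongrightarrow> B * (S n - \<sigma>)"
        by (intro tendsto_intros S_lim)
      show "\<exists>N. \<forall>k\<ge>N. dist (P k) (P n) \<le> B * (S n - S k)"
        using Pdist by blast
    qed
    then show ?thesis using pE S_ge by (simp add: R_def ZPS)
  qed
  have "\<sigma> = 0"
  proof (rule ccontr)
    assume "\<sigma> \<noteq> 0"
    then have "\<sigma> > 0" using S_ge Snn nonneg pE by fastforce
    then obtain q t where qt: "(q,t)\<in>E" "t < \<sigma>" "dist q p \<le> B*(\<sigma> - t)"
      using step[OF pE] by blast
    then have "(q,t) \<in> R (p,\<sigma>)" by (simp add: R_def)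
    then have "(q,t) \<in> R (Z n)" for n using pR Rtrans by blast
    then have "m (Z n) \<le> t" for n using mle by fastforce
    then have "S (Suc n) \<le> (S n + t)/2" for n
    proof -
      have "m (Z n) \<le> t" by fact
      moreover have "snd (Z (Suc n)) \<le> (snd (Z n) + m (Z n)) / 2" using Zsuc[of n] by blast
      ultimately show ?thesis unfolding S_def apply -
        apply (rule order_trans, assumption) by (simp add: divide_right_mono)
    qed
    moreover have "(\<lambda>n. S (Suc n)) \<longlonglongrightarrow> \<sigma>" using S_lim by (rule LIMSEQ_Suc)
    moreover have "(\<lambda>n. (S n + t)/2) \<longlonglongrightarrow> (\<sigma> + t)/2" by (intro tendsto_intros S_lim) auto
    ultimately have "\<sigma> \<le> (\<sigma> + t)/2" by (intro LIMSEQ_le) auto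
    then show False using qt by simp
  qed
  then have "(p,0) \<in> R (Z 0)" using pR[of 0] by simp
  then show ?thesis by (auto simp: R_def Z_def)
qed


theorem lemma2p2:
  fixes G :: "'a::{real_inner,complete_space} \<Rightarrow> 'w::banach \<Rightarrow> real"
    and DG :: "'a \<Rightarrow> 'w \<Rightarrow> 'a"
    and lam c L :: real
    and \<mu>1 :: "'w \<Rightarrow> real \<Rightarrow> real" and \<mu>2 :: "real \<Rightarrow> real"
  assumes G_nonneg: "\<And>x w. G x w \<ge> 0"
    and G_loclip: "loc_lipschitz (\<lambda>(x, w). G x w)"
    and DG_grad: "\<And>x w y. ((\<lambda>t. (G (x + t *\<^sub>R y) w - G x w) / t) \<longlongrightarrow> DG x w \<bullet> y) (at 0)"
    and pos: "lam > 0" "c > 0" "L > 0"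
    and mu1_nonneg: "\<And>w s. s \<ge> 0 \<Longrightarrow> \<mu>1 w s \<ge> 0"
    and mu2_nonneg: "\<And>s. s \<ge> 0 \<Longrightarrow> \<mu>2 s \<ge> 0"
    and mu1_0: "\<And>w. \<mu>1 w 0 = 0" and mu2_0: "\<mu>2 0 = 0"
    and mu1_inf: "\<And>w. filterlim (\<mu>1 w) at_top at_top"
    and mu2_inf: "filterlim \<mu>2 at_top at_top"
    and H1: "\<And>x w. G x w = 1 \<Longrightarrow> norm (DG x w) \<ge> c"
    and H2: "\<And>x y w. x \<in> Zset G w \<Longrightarrow> y \<in> Zset G w \<Longrightarrow>
               norm (DG x w - DG y w) \<le> \<mu>1 w (norm (x - y))"
    and H3: "\<And>x z w. x \<in> frontier (Zset G w) \<Longrightarrow> z \<in> Zset G w \<Longrightarrow>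
               (DG x w - DG z w) \<bullet> (x - z) \<ge> - lam * (norm (x - z))\<^sup>2"
    and H4: "\<And>x w w'. \<bar>G x w - G x w'\<bar> \<le> L * norm (w - w')"
    and H5: "\<And>x w \<rho>. \<rho> > 0 \<Longrightarrow> edist_set x (Zset G w) \<ge> ereal \<rho> \<Longrightarrow> G x w - 1 \<ge> \<mu>2 \<rho>"
  shows "\<forall>K>0. \<exists>C>0. \<forall>w1 w2. max (norm w1) (norm w2) \<le> K \<longrightarrow>
           hdist (Zset G w1) (Zset G w2) \<le> ereal (C * norm (w1 - w2))"
proof -
  let ?f = "\<lambda>(x, w). G x w"
  have cont: "isCont ?f z" for z
  proof -
    obtain r M where r: "r > 0" and lip: "\<forall>a\<in>ball z r. \<forall>b\<in>ball z r. dist (?f a) (?f b) \<le> M * dist a b"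
      using G_loclip unfolding loc_lipschitz_def by blast
    show ?thesis unfolding continuous_at_eps_delta
    proof (intro allI impI)
      fix e :: real assume e: "e > 0"
      show "\<exists>d>0. \<forall>x'. dist x' z < d \<longrightarrow> dist (?f x') (?f z) < e"
      proof (intro exI[of _ "min r (e/(\<bar>M\<bar>+1))"] conjI allI impI)
        show "min r (e/(\<bar>M\<bar>+1)) > 0" using r e by auto
        fix x' assume d: "dist x' z < min r (e/(\<bar>M\<bar>+1))"
        then have "x' \<in> ball z r" by (simp add: dist_commute)
        then have "dist (?f x') (?f z) \<le> M * dist x' z" using lip r by auto
        also have "\<dots> \<le> \<bar>M\<bar> * dist x' z" by (simp add: abs_ge_self mult_right_mono)
        also have "\<dots> \<le> \<bar>M\<bar> * (e/(\<bar>M\<bar>+1))" using d by (intro mult_left_mono) auto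
        also have "\<dots> < e" using e by (simp add: field_simps)
        finally show "dist (?f x') (?f z) < e" .
      qed
    qed
  qed
  define C where "C = 2 * L / c"
  have Cpos: "C > 0" using pos by (simp add: C_def)
  have side: "edist_set x (Zset G w2) \<le> ereal (C * norm (w1 - w2))"
    if xZ: "x \<in> Zset G w1" for w1 w2 x
  proof -
    define \<delta> where "\<delta> = norm (w1 - w2)"
    define w where "w s = w2 + s *\<^sub>R (w1 - w2)" for s
    define E where "E = {(p, s). 0 \<le> s \<and> s \<le> 1 \<and> G p (w s) \<le> 1}"
    define B where "B = C * \<delta>"
    have \<delta>nn: "\<delta> \<ge> 0" by (simp add: \<delta>_def)
    have wdiff: "G q (w a) \<le> G q (w b) + L * (\<bar>a - b\<bar> * \<delta>)" for q a b
    proof -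
      have "norm (w a - w b) = \<bar>a - b\<bar> * \<delta>"
        by (simp add: w_def \<delta>_def scaleR_diff_left[symmetric])
      then have "\<bar>G q (w a) - G q (w b)\<bar> \<le> L * (\<bar>a - b\<bar> * \<delta>)" using H4[of q "w a" "w b"] by simp
      then show ?thesis by (simp add: abs_le_iff)
    qed
    have Bnn: "B \<ge> 0" using Cpos \<delta>nn by (simp add: B_def)
    have closedE: "(p,s)\<in>E" if PS: "\<And>n. (P n, S n) \<in> E" and Pl: "P \<longlonglongrightarrow> p" and Sl: "S \<longlonglongrightarrow> s" for P S p s
    proof -
      have "(\<lambda>n. (P n, w (S n))) \<longlonglongrightarrow> (p, w s)"
        unfolding w_def by (intro tendsto_intros Pl Sl)
      then have "(\<lambda>n. ?f (P n, w (S n))) \<longlonglongrightarrow> ?f (p, w s)"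
        by (rule isCont_tendsto_compose[OF cont])
      then have Gl: "(\<lambda>n. G (P n) (w (S n))) \<longlonglongrightarrow> G p (w s)" by simp
      have "G p (w s) \<le> 1" using PS by (intro LIMSEQ_le_const2[OF Gl]) (auto simp: E_def)
      moreover have "0 \<le> s" using PS by (intro LIMSEQ_le_const[OF Sl]) (auto simp: E_def)
      moreover have "s \<le> 1" using PS by (intro LIMSEQ_le_const2[OF Sl]) (auto simp: E_def)
      ultimately show ?thesis by (simp add: E_def)
    qed
    have step: "\<exists>q t. (q,t)\<in>E \<and> t < s \<and> dist q p \<le> B*(s - t)" if pE: "(p,s)\<in>E" and s0: "s > 0" for p s
    proof -
      have s1: "s \<le> 1" and Gp: "G p (w s) \<le> 1" using pE by (auto simp: E_def)
      show ?thesis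
      proof (cases "G p (w s) < 1")
        case True
        define t where "t = max (s/2) (s - (1 - G p (w s)) / (L*\<delta> + 1))"
        have den: "L*\<delta> + 1 > 0" using pos \<delta>nn by (simp add: add_nonneg_pos)
        have ts: "t < s" using s0 True den by (auto simp: t_def)
        have t0: "t \<ge> 0" using s0 by (auto simp: t_def)
        have "s - t \<le> (1 - G p (w s)) / (L*\<delta> + 1)" by (auto simp: t_def)
        then have "(s - t) * (L*\<delta> + 1) \<le> 1 - G p (w s)" using den by (simp add: pos_le_divide_eq)
        moreover have "L * (\<bar>t - s\<bar> * \<delta>) \<le> (s - t) * (L*\<delta> + 1)"
          using ts pos \<delta>nn by (simp add: algebra_simps)
        ultimately have "G p (w t) \<le> 1" using wdiff[of p t s] by linarith
        then show ?thesis using ts t0 s1 Bnn by (intro exI[of _ p] exI[of _ t]) (auto simp: E_def)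
      next
        case False
        then have G1: "G p (w s) = 1" using Gp by simp
        define v where "v = DG p (w s)"
        have vc: "norm v \<ge> c" using H1[OF G1] by (simp add: v_def)
        have vpos: "norm v > 0" using vc pos by linarith
        have lim: "((\<lambda>t. (G (p + t *\<^sub>R (- v)) (w s) - G p (w s)) / t) \<longlongrightarrow> (- (norm v)\<^sup>2)) (at 0)"
          using DG_grad[where x=p and w="w s" and y="-v"] by (simp add: v_def power2_norm_eq_inner)
        have "- (norm v)\<^sup>2 < - (norm v)\<^sup>2 / 2" using vpos by simp
        then have "eventually (\<lambda>t. (G (p + t *\<^sub>R (- v)) (w s) - G p (w s)) / t < - (norm v)\<^sup>2 / 2) (at 0)"
          using order_tendstoD(2)[OF lim] by blast
        then obtain t0 where t0: "t0 > 0"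
          and t0P: "\<And>t. t \<noteq> 0 \<Longrightarrow> dist t 0 < t0 \<Longrightarrow> (G (p + t *\<^sub>R (- v)) (w s) - G p (w s)) / t < - (norm v)\<^sup>2 / 2"
          unfolding eventually_at by auto
        have decr: "G (p - t *\<^sub>R v) (w s) \<le> 1 - t * (norm v)\<^sup>2 / 2" if "0 \<le> t" "t < t0" for t
        proof (cases "t = 0")
          case True then show ?thesis using G1 by simp
        next
          case False
          then have tp: "t > 0" using that by simp
          have "(G (p + t *\<^sub>R (- v)) (w s) - G p (w s)) / t < - (norm v)\<^sup>2 / 2"
            using t0P[of t] False that by simp
          then have "G (p + t *\<^sub>R (- v)) (w s) - G p (w s) < - (norm v)\<^sup>2 / 2 * t"
            using tp by (simp add: divide_less_eq)
          then show ?thesis using G1 by (simp add: algebra_simps)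
        qed
        define k where "k = t0 * (norm v)\<^sup>2 / (2 * (2*L*\<delta> + 1))"
        have den: "2*L*\<delta> + 1 > 0" using pos \<delta>nn by (simp add: add_nonneg_pos)
        have kpos: "k > 0" using t0 vpos den by (simp add: k_def)
        define s' where "s' = max (s/2) (s - k)"
        have s's: "s' < s" using s0 kpos by (auto simp: s'_def)
        have s'0: "s' \<ge> 0" using s0 by (auto simp: s'_def)
        have sk: "s - s' \<le> k" by (auto simp: s'_def)
        define t where "t = 2 * L * \<delta> * (s - s') / (norm v)\<^sup>2"
        have tnn: "t \<ge> 0" using pos \<delta>nn s's by (simp add: t_def)
        have "t \<le> 2 * L * \<delta> * k / (norm v)\<^sup>2"
          unfolding t_def using sk pos \<delta>nn by (intro divide_right_mono mult_left_mono) auto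
        also have "\<dots> = t0 * (L*\<delta>) / (2*L*\<delta> + 1)"
        proof -
          have n2: "(norm v)\<^sup>2 \<noteq> 0" using vpos by simp
          have d2: "2*L*\<delta> + 1 \<noteq> 0" using den by simp
          have gen: "\<And>n d. n \<noteq> 0 \<Longrightarrow> d \<noteq> 0 \<Longrightarrow> 2*L*\<delta>*(t0*n/(2*d))/n = t0*(L*\<delta>)/d"
            by (simp add: field_simps)
          show ?thesis unfolding k_def using gen[OF n2 d2] by simp
        qed
        also have "\<dots> < t0"
        proof -
          have "t0 * (L*\<delta>) < t0 * (2*L*\<delta> + 1)" using t0 pos \<delta>nn by (intro mult_strict_left_mono) (auto simp: add_nonneg_pos)
          then show ?thesis using den by (simp add: divide_less_eq)
        qed
        finally have tt0: "t < t0" .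
        define q where "q = p - t *\<^sub>R v"
        have "G q (w s') \<le> G q (w s) + L * (\<bar>s' - s\<bar> * \<delta>)" by (rule wdiff)
        also have "\<dots> \<le> 1 - t * (norm v)\<^sup>2 / 2 + L * ((s - s') * \<delta>)"
          using decr[OF tnn tt0] s's by (simp add: q_def)
        also have "t * (norm v)\<^sup>2 / 2 = L * ((s - s') * \<delta>)"
          using vpos by (simp add: t_def field_simps)
        finally have Gq: "G q (w s') \<le> 1" by simp
        have "dist q p = t * norm v" using tnn by (simp add: q_def dist_norm)
        also have "\<dots> = 2 * L * \<delta> * (s - s') / norm v"
          using vpos by (simp add: t_def power2_eq_square field_simps)
        also have "\<dots> \<le> 2 * L * \<delta> * (s - s') / c"
          using vc vpos pos \<delta>nn s's by (intro divide_left_mono) auto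
        also have "\<dots> = B * (s - s')" by (simp add: B_def C_def)
        finally show ?thesis using Gq s's s'0 s1 by (intro exI[of _ q] exI[of _ s']) (auto simp: E_def)
      qed
    qed
    have start: "(x, 1) \<in> E" using xZ by (simp add: E_def w_def Zset_def)
    have nonneg: "0 \<le> s" if "(p,s)\<in>E" for p s using that by (simp add: E_def)
    obtain p where p: "(p,0)\<in>E" "dist p x \<le> B * 1"
    proof -
      have "\<exists>p. (p,0)\<in>E \<and> dist p x \<le> B * 1"
        apply (rule greedy[of B E])
            apply (rule Bnn)
           apply (erule nonneg)
          apply (erule closedE; assumption)
         apply (erule step; assumption)
        by (rule start)
      then show ?thesis using that by blast
    qed
    have pZ: "p \<in> Zset G w2" using p by (simp add: E_def w_def Zset_def)
    have "edist_set x (Zset G w2) \<le> ereal (dist x p)"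
      unfolding edist_set_def using pZ by (rule INF_lower)
    also have "\<dots> \<le> ereal (C * norm (w1 - w2))" using p by (simp add: B_def \<delta>_def dist_commute)
    finally show ?thesis .
  qed
  show ?thesis
  proof (intro allI impI exI[of _ C] conjI Cpos)
    fix K :: real and w1 w2 :: 'w
    show "hdist (Zset G w1) (Zset G w2) \<le> ereal (C * norm (w1 - w2))"
      unfolding hdist_def
    proof (rule max.boundedI)
      show "(SUP z\<in>Zset G w1. edist_set z (Zset G w2)) \<le> ereal (C * norm (w1 - w2))"
        by (rule SUP_least) (rule side)
      show "(SUP z\<in>Zset G w2. edist_set z (Zset G w1)) \<le> ereal (C * norm (w1 - w2))"
        by (rule SUP_least) (metis side norm_minus_commute)
    qed
  qed
qed

end
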